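(* In the projected continuous MRA model with any $L\ge1$, for all $\theta,\theta_*\in\mathbb{R}^d$, \[\tilde s_1(\theta)=\big(\theta^{(0)}-\theta_*^{(0)}\big)^2,\qquad \tilde s_2(\theta)=\big((\theta^{(0)})^2-(\theta_*^{(0)})^2\big)^2+\tfrac14\sum_{l=1}^L\big(r_l(\theta)^2-r_l(\theta_* )^2\big)^2,\] \[\tilde s_3(\theta)=\tfrac23\big((\theta^{(0)})^3-(\theta_*^{(0)})^3\big)^2+\tfrac12\sum_{l=1}^L\big(\theta^{(0)}r_l(\theta)^2-\theta_*^{(0)}r_l(\theta_* )^2\big)^2+\tfrac1{16}\sum_{\substack{l,l',l''=1\\l=l'+l''}}^L\Big(r_{l,l',l''}(\theta)^2+r_{l,l',l''}(\theta_* )^2-2r_{l,l',l''}(\theta)r_{l,l',l''}(\theta_* )\cos\big(\lambda_{l,l',l''}(\theta_* )-\lambda_{l,l',l''}(\theta)\big)\] \[\qquad+r_{l,l',l''}(\theta)^2\cos\big(2\lambda_{l,l',l''}(\theta)\big)+r_{l,l',l''}(\theta_* )^2\cos\big(2\lambda_{l,l',l''}(\theta_* )\big)-2r_{l,l',l''}(\theta)r_{l,l',l''}(\theta_* )\cos\big(\lambda_{l,l',l''}(\theta_* )+\lambda_{l,l',l''}(\theta)\big)\Big).\]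
   Context: Let $\theta=(\theta^{(0)},\theta_1^{(1)},\theta_2^{(1)},\dots,\theta_1^{(L)},\theta_2^{(L)})\in\mathbb{R}^d$, $d=2L+1$; $\mathsf{G}\subset\mathsf{O}(d)$ is the group of $g=\operatorname{diag}(1,R_1(\mathfrak g),\dots,R_L(\mathfrak g))$, $\mathfrak g\in[0,1)$, $R_l(\mathfrak g)=\begin{pmatrix}\cos2\pi l\mathfrak g&\sin2\pi l\mathfrak g\\-\sin2\pi l\mathfrak g&\cos2\pi l\mathfrak g\end{pmatrix}$, with Haar probability measure $\Lambda$; $\Pi(\theta)=\sqrt2(\theta^{(0)},\theta_1^{(1)},\dots,\theta_1^{(L)})\in\mathbb{R}^{L+1}$. $\widetilde T_k(\theta)=\int(\Pi g\theta)^{\otimes k}d\Lambda(g)$ and $\tilde s_k(\theta)=\frac1{2(k!)}\|\widetilde T_k(\theta)-\widetilde T_k(\theta_* )\|^2_{\mathrm{HS}}$ (Euclidean norm of tensor entries). For $l\ge1$, $\theta_1^{(l)}+i\theta_2^{(l)}=r_l(\theta)e^{i\lambda_l(\theta)}$; $r_{l,l',l''}=r_lr_{l'}r_{l''}$, $\lambda_{l,l',l''}=\lambda_l-\lambda_{l'}-\lambda_{l''}$. *)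

theory Defs
  imports "HOL-Analysis.Analysis" "HOL-Library.FuncSet"
begin

text \<open>Encoding of theta in R^d, d = 2L+1, as a function nat => real:
  theta 0 = theta^(0), theta (2l-1) = theta_1^(l), theta (2l) = theta_2^(l), 1 <= l <= L.
  Entries at indices > 2L are irrelevant.\<close>

definition th0 :: "(nat \<Rightarrow> real) \<Rightarrow> real" where
  "th0 \<theta> = \<theta> 0"

definition th1 :: "(nat \<Rightarrow> real) \<Rightarrow> nat \<Rightarrow> real" where
  "th1 \<theta> l = \<theta> (2*l - 1)"

definition th2 :: "(nat \<Rightarrow> real) \<Rightarrow> nat \<Rightarrow> real" where
  "th2 \<theta> l = \<theta> (2*l)"

text \<open>The group element g(t), t in [0,1), acting on theta, then projected by Pi:
  component i of Pi (g(t) theta) in R^{L+1}, i = 0..L.\<close>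
definition proj_rot :: "(nat \<Rightarrow> real) \<Rightarrow> real \<Rightarrow> nat \<Rightarrow> real" where
  "proj_rot \<theta> t i =
     (if i = 0 then sqrt 2 * th0 \<theta>
      else sqrt 2 * (cos (2*pi*real i*t) * th1 \<theta> i + sin (2*pi*real i*t) * th2 \<theta> i))"

text \<open>Entry of the averaged moment tensor: the Haar probability measure on G is the
  uniform (Lebesgue) measure on the parameter interval [0,1).\<close>
definition Tt :: "nat \<Rightarrow> (nat \<Rightarrow> real) \<Rightarrow> (nat \<Rightarrow> nat) \<Rightarrow> real" where
  "Tt k \<theta> idx = integral {0..<1} (\<lambda>t. \<Prod>j<k. proj_rot \<theta> t (idx j))"

definition st :: "nat \<Rightarrow> nat \<Rightarrow> (nat \<Rightarrow> real) \<Rightarrow> (nat \<Rightarrow> real) \<Rightarrow> real" where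
  "st L k \<theta> \<theta>s = 1 / (2 * fact k) *
     (\<Sum>idx \<in> {..<k} \<rightarrow>\<^sub>E {0..L}. (Tt k \<theta> idx - Tt k \<theta>s idx)\<^sup>2)"

definition rr :: "(nat \<Rightarrow> real) \<Rightarrow> nat \<Rightarrow> real" where
  "rr \<theta> l = cmod (Complex (th1 \<theta> l) (th2 \<theta> l))"

definition lam :: "(nat \<Rightarrow> real) \<Rightarrow> nat \<Rightarrow> real" where
  "lam \<theta> l = Arg (Complex (th1 \<theta> l) (th2 \<theta> l))"

definition rrr :: "(nat \<Rightarrow> real) \<Rightarrow> nat \<Rightarrow> nat \<Rightarrow> nat \<Rightarrow> real" where
  "rrr \<theta> l l' l'' = rr \<theta> l * rr \<theta> l' * rr \<theta> l''"

definition lll :: "(nat \<Rightarrow> real) \<Rightarrow> nat \<Rightarrow> nat \<Rightarrow> nat \<Rightarrow> real" where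
  "lll \<theta> l l' l'' = lam \<theta> l - lam \<theta> l' - lam \<theta> l''"

end

theory Submission
  imports Defs
begin


lemma Ico_Icc_has_integral:
  fixes f :: "real \<Rightarrow> real"
  shows "(f has_integral I) {0..<1} \<longleftrightarrow> (f has_integral I) {0..1}"
  by (rule has_integral_spike_set_eq) (auto intro: negligible_subset[of "{1}"])

lemma int_cos_sin:
  fixes m :: int and a b :: real
  shows "((\<lambda>t. a * cos (2*pi* of_int m*t) + b * sin (2*pi* of_int m*t)) has_integral (if m = 0 then a else 0)) {0..<1}"
proof (cases "m = 0")
  case True
  then show ?thesis unfolding Ico_Icc_has_integral
    using has_integral_const_real[of a 0 1] by simp
next
  case False
  define w where "w = 2*pi* of_int m"
  have w: "w \<noteq> 0" using False by (simp add: w_def)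
  define F where "F t = (a * sin (w*t) - b * cos (w*t)) / w" for t
  have d: "(F has_real_derivative (a * cos (w*t) + b * sin (w*t))) (at t)" for t
    unfolding F_def using w
    by (auto intro!: derivative_eq_intros simp: field_simps)
  have "F 1 = F 0"
    unfolding F_def w_def
    by simp
  moreover have "((\<lambda>t. a * cos (w*t) + b * sin (w*t)) has_integral (F 1 - F 0)) {0..1}"
    by (rule fundamental_theorem_of_calculus) (auto intro: d[THEN DERIV_subset] simp: has_real_derivative_iff_has_vector_derivative[symmetric] has_field_derivative_at_within d)
  ultimately show ?thesis using False unfolding Ico_Icc_has_integral w_def by simp
qed

lemma int_Re_cis:
  fixes m :: int
  assumes "x = of_int m"
  shows "((\<lambda>t. Re (C * cis (2*pi*x*t))) has_integral (if m = 0 then Re C else 0)) {0..<1}"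
  using int_cos_sin[of "Re C" m "- Im C"] assms by (simp add: cis.code)

definition W :: "(nat \<Rightarrow> real) \<Rightarrow> nat \<Rightarrow> complex" where
  "W \<theta> i = (if i = 0 then complex_of_real (\<theta> 0) else Complex (th1 \<theta> i) (th2 \<theta> i))"

lemma proj_rot_W: "proj_rot \<theta> t i = sqrt 2 * Re (cnj (W \<theta> i) * cis (2*pi*real i*t))"
  by (simp add: proj_rot_def W_def th0_def cis.code)

lemma Re3: "Re x * Re y * Re z = (Re (x*y*z) + Re (x*y*cnj z) + Re (x*cnj y*z) + Re (cnj x*y*z)) / 4"
  by (simp add: algebra_simps)

lemma Re2: "Re x * Re y = (Re (x*y) + Re (x*cnj y)) / 2"
  by (simp add: algebra_simps)

lemma prod2: "Re (A*cis a) * Re (B*cis b) = (Re (A*B*cis(a+b)) + Re (A*cnj B*cis(a-b))) / 2"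
  unfolding Re2 by (simp add: cis_mult cis_cnj algebra_simps)

lemma prod3: "Re (A*cis a) * Re (B*cis b) * Re (C*cis c) =
   (Re (A*B*C*cis(a+b+c)) + Re (A*B*cnj C*cis(a+b-c)) + Re (A*cnj B*C*cis(a-b+c)) + Re (cnj A*B*C*cis(b+c-a))) / 4"
  unfolding Re3 by (simp add: cis_mult cis_cnj algebra_simps)


lemma prod_lt2: "(\<Prod>n::nat<2. f n) = (f 0 * f 1 :: real)"
  by (simp add: numeral_2_eq_2)
lemma prod_lt3: "(\<Prod>n::nat<3. f n) = (f 0 * f 1 * f 2 :: real)"
  by (simp add: numeral_3_eq_3 numeral_2_eq_2)

definition F2 :: "(nat \<Rightarrow> real) \<Rightarrow> nat \<Rightarrow> nat \<Rightarrow> real" where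
  "F2 \<theta> i j = (if i + j = 0 then Re (cnj (W \<theta> i) * cnj (W \<theta> j)) else 0)
     + (if i = j then Re (cnj (W \<theta> i) * W \<theta> j) else 0)"

definition F3 :: "(nat \<Rightarrow> real) \<Rightarrow> nat \<Rightarrow> nat \<Rightarrow> nat \<Rightarrow> real" where
  "F3 \<theta> i j k = (if i + j + k = 0 then Re (cnj (W \<theta> i) * cnj (W \<theta> j) * cnj (W \<theta> k)) else 0)
     + (if i + j = k then Re (cnj (W \<theta> i) * cnj (W \<theta> j) * W \<theta> k) else 0)
     + (if i + k = j then Re (cnj (W \<theta> i) * W \<theta> j * cnj (W \<theta> k)) else 0)
     + (if j + k = i then Re (W \<theta> i * cnj (W \<theta> j) * cnj (W \<theta> k)) else 0)"

lemma Tt1: "Tt 1 \<theta> idx = sqrt 2 * (if idx 0 = 0 then \<theta> 0 else 0)"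
proof -
  have "((\<lambda>t. Re (cnj (W \<theta> (idx 0)) * cis (2*pi*real (idx 0)*t))) has_integral
     (if int (idx 0) = 0 then Re (cnj (W \<theta> (idx 0))) else 0)) {0..<1}"
    by (rule int_Re_cis) simp
  then have "((\<lambda>t. \<Prod>j<1. proj_rot \<theta> t (idx j)) has_integral sqrt 2 * (if idx 0 = 0 then \<theta> 0 else 0)) {0..<1}"
    unfolding proj_rot_W by (auto dest: has_integral_mult_right[where c="sqrt 2"] simp: W_def)
  then show ?thesis unfolding Tt_def by (rule integral_unique)
qed

lemma Tt2: "Tt 2 \<theta> idx = F2 \<theta> (idx 0) (idx 1)"
proof -
  define i where "i = idx 0"
  define j where "j = idx 1"
  define A where "A = cnj (W \<theta> i)"
  define B where "B = cnj (W \<theta> j)"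
  have eq: "(\<lambda>t. \<Prod>n<2. proj_rot \<theta> t (idx n)) = (\<lambda>t. 
     Re (A*B*cis(2*pi*(real i + real j)*t)) + Re (A*cnj B*cis(2*pi*(real i - real j)*t)))"
  proof
    fix t
    have "(\<Prod>n<2. proj_rot \<theta> t (idx n)) = sqrt 2 * sqrt 2 *
       (Re (A*cis(2*pi*real i*t)) * Re (B*cis(2*pi*real j*t)))"
      by (simp only: prod_lt2 prod_lt3 proj_rot_W i_def j_def A_def B_def mult_1_left mult_ac)
    also have "\<dots> = Re (A*B*cis(2*pi*(real i + real j)*t)) + Re (A*cnj B*cis(2*pi*(real i - real j)*t))"
    proof -
      have a1: "2*pi*real i*t + 2*pi*real j*t = 2*pi*(real i + real j)*t" by (simp add: algebra_simps)
      have a2: "2*pi*real i*t - 2*pi*real j*t = 2*pi*(real i - real j)*t" by (simp add: algebra_simps)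
      have key: "\<And>X::real. sqrt 2 * sqrt 2 * (X / 2) = X" by simp
      show ?thesis by (simp only: prod2 a1 a2 key)
    qed
    finally show "(\<Prod>n<2. proj_rot \<theta> t (idx n)) = \<dots>" .
  qed
  have "((\<lambda>t. \<Prod>n<2. proj_rot \<theta> t (idx n)) has_integral
     ((if int i + int j = 0 then Re (A*B) else 0) + (if int i - int j = 0 then Re (A*cnj B) else 0))) {0..<1}"
    unfolding eq by (intro has_integral_add int_Re_cis) auto
  moreover have "((if int i + int j = 0 then Re (A*B) else 0) + (if int i - int j = 0 then Re (A*cnj B) else 0))
      = F2 \<theta> i j" by (simp add: F2_def A_def B_def)
  ultimately show ?thesis unfolding Tt_def i_def j_def by (metis integral_unique)
qed

lemma Tt3: "Tt 3 \<theta> idx = sqrt 2 / 2 * F3 \<theta> (idx 0) (idx 1) (idx 2)"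
proof -
  define i where "i = idx 0"
  define j where "j = idx 1"
  define k where "k = idx 2"
  define A where "A = cnj (W \<theta> i)"
  define B where "B = cnj (W \<theta> j)"
  define C where "C = cnj (W \<theta> k)"
  have s: "sqrt 2 * sqrt 2 * sqrt 2 / 4 = sqrt 2 / 2" by simp
  have eq: "(\<lambda>t. \<Prod>n<3. proj_rot \<theta> t (idx n)) = (\<lambda>t. sqrt 2 / 2 * (
     Re (A*B*C*cis(2*pi*(real i + real j + real k)*t)) + Re (A*B*cnj C*cis(2*pi*(real i + real j - real k)*t))
     + Re (A*cnj B*C*cis(2*pi*(real i - real j + real k)*t)) + Re (cnj A*B*C*cis(2*pi*(real j + real k - real i)*t))))"
  proof
    fix t
    have "(\<Prod>n<3. proj_rot \<theta> t (idx n)) = sqrt 2 * sqrt 2 * sqrt 2 *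
       (Re (A*cis(2*pi*real i*t)) * Re (B*cis(2*pi*real j*t)) * Re (C*cis(2*pi*real k*t)))"
      by (simp only: prod_lt2 prod_lt3 proj_rot_W i_def j_def k_def A_def B_def C_def mult_1_left mult_ac)
    also have "\<dots> = sqrt 2 / 2 * (
     Re (A*B*C*cis(2*pi*(real i + real j + real k)*t)) + Re (A*B*cnj C*cis(2*pi*(real i + real j - real k)*t))
     + Re (A*cnj B*C*cis(2*pi*(real i - real j + real k)*t)) + Re (cnj A*B*C*cis(2*pi*(real j + real k - real i)*t)))"
    proof -
      have a1: "2*pi*real i*t + 2*pi*real j*t + 2*pi*real k*t = 2*pi*(real i + real j + real k)*t" by (simp add: algebra_simps)
      have a2: "2*pi*real i*t + 2*pi*real j*t - 2*pi*real k*t = 2*pi*(real i + real j - real k)*t" by (simp add: algebra_simps)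
      have a3: "2*pi*real i*t - 2*pi*real j*t + 2*pi*real k*t = 2*pi*(real i - real j + real k)*t" by (simp add: algebra_simps)
      have a4: "2*pi*real j*t + 2*pi*real k*t - 2*pi*real i*t = 2*pi*(real j + real k - real i)*t" by (simp add: algebra_simps)
      have key: "\<And>X::real. sqrt 2 * sqrt 2 * sqrt 2 * (X / 4) = sqrt 2 / 2 * X" by simp
      show ?thesis by (simp only: prod3 a1 a2 a3 a4 key)
    qed
    finally show "(\<Prod>n<3. proj_rot \<theta> t (idx n)) = \<dots>" .
  qed
  have "((\<lambda>t. \<Prod>n<3. proj_rot \<theta> t (idx n)) has_integral sqrt 2 / 2 *
     ((if int i + int j + int k = 0 then Re (A*B*C) else 0) + (if int i + int j - int k = 0 then Re (A*B*cnj C) else 0)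
     + (if int i - int j + int k = 0 then Re (A*cnj B*C) else 0) + (if int j + int k - int i = 0 then Re (cnj A*B*C) else 0))) {0..<1}"
    unfolding eq by (intro has_integral_add int_Re_cis has_integral_mult_right) auto
  moreover have "((if int i + int j + int k = 0 then Re (A*B*C) else 0) + (if int i + int j - int k = 0 then Re (A*B*cnj C) else 0)
     + (if int i - int j + int k = 0 then Re (A*cnj B*C) else 0) + (if int j + int k - int i = 0 then Re (cnj A*B*C) else 0))
      = F3 \<theta> i j k" by (simp add: F3_def A_def B_def C_def algebra_simps)
  ultimately show ?thesis unfolding Tt_def i_def j_def k_def by (metis integral_unique)
qed


lemma sum_PiE1: "(\<Sum>idx\<in>{..<1::nat} \<rightarrow>\<^sub>E S. (f (idx 0) :: real)) = (\<Sum>i\<in>S. f i)"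
proof -
  have "bij_betw (\<lambda>idx. idx 0) ({..<1::nat} \<rightarrow>\<^sub>E S) S"
  proof (rule bij_betw_byWitness[where f'="\<lambda>i. (\<lambda>n. if n = 0 then i else undefined)"])
    show "\<forall>a\<in>{..<1::nat} \<rightarrow>\<^sub>E S. (\<lambda>n. if n = 0 then a 0 else undefined) = a"
      by (auto simp: fun_eq_iff PiE_def extensional_def)
  qed (auto simp: PiE_def extensional_def)
  then show ?thesis by (rule sum.reindex_bij_betw)
qed

lemma sum_PiE2: "(\<Sum>idx\<in>{..<2::nat} \<rightarrow>\<^sub>E S. (f (idx 0) (idx 1) :: real)) = (\<Sum>i\<in>S. \<Sum>j\<in>S. f i j)"
proof -
  have "bij_betw (\<lambda>idx. (idx 0, idx 1)) ({..<2::nat} \<rightarrow>\<^sub>E S) (S \<times> S)"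
  proof (rule bij_betw_byWitness[where f'="\<lambda>(i,j). (\<lambda>n. if n = 0 then i else if n = 1 then j else undefined)"])
    show "\<forall>a\<in>{..<2::nat} \<rightarrow>\<^sub>E S. (\<lambda>(i,j). (\<lambda>n. if n = 0 then i else if n = 1 then j else undefined)) (a 0, a 1) = a"
      by (auto simp: fun_eq_iff PiE_def extensional_def)
  qed (auto simp: PiE_def extensional_def)
  then have "(\<Sum>idx\<in>{..<2::nat} \<rightarrow>\<^sub>E S. (\<lambda>(i,j). f i j) (idx 0, idx 1)) = (\<Sum>z\<in>S \<times> S. (\<lambda>(i,j). f i j) z)"
    by (rule sum.reindex_bij_betw)
  then show ?thesis by (simp add: sum.cartesian_product)
qed

lemma sum_PiE3: "(\<Sum>idx\<in>{..<3::nat} \<rightarrow>\<^sub>E S. (f (idx 0) (idx 1) (idx 2) :: real)) = (\<Sum>i\<in>S. \<Sum>j\<in>S. \<Sum>k\<in>S. f i j k)"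
proof -
  have "bij_betw (\<lambda>idx. (idx 0, idx 1, idx 2)) ({..<3::nat} \<rightarrow>\<^sub>E S) (S \<times> S \<times> S)"
  proof (rule bij_betw_byWitness[where f'="\<lambda>(i,j,k). (\<lambda>n. if n = 0 then i else if n = 1 then j else if n = 2 then k else undefined)"])
    show "\<forall>a\<in>{..<3::nat} \<rightarrow>\<^sub>E S. (\<lambda>(i,j,k). (\<lambda>n. if n = 0 then i else if n = 1 then j else if n = 2 then k else undefined)) (a 0, a 1, a 2) = a"
      by (auto simp: fun_eq_iff PiE_def extensional_def)
  qed (auto simp: PiE_def extensional_def)
  then have "(\<Sum>idx\<in>{..<3::nat} \<rightarrow>\<^sub>E S. (\<lambda>(i,j,k). f i j k) (idx 0, idx 1, idx 2)) = (\<Sum>z\<in>S \<times> S \<times> S. (\<lambda>(i,j,k). f i j k) z)"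
    by (rule sum.reindex_bij_betw)
  then show ?thesis by (simp add: sum.cartesian_product)
qed


lemma split1: "(\<Sum>i\<in>{0..(L::nat)}. g i) = g 0 + (\<Sum>i\<in>{1..L}. (g i :: real))"
  using sum.atLeast_Suc_atMost[of 0 L g] by simp

lemma split2: "(\<Sum>i\<in>{0..(L::nat)}. \<Sum>j\<in>{0..L}. g i j) = g 0 0 + (\<Sum>j\<in>{1..L}. g 0 j) + (\<Sum>i\<in>{1..L}. g i 0)
   + (\<Sum>i\<in>{1..L}. \<Sum>j\<in>{1..L}. (g i j :: real))"
  by (simp add: split1 sum.distrib)

lemma st1: "st L 1 \<theta> \<theta>s = (th0 \<theta> - th0 \<theta>s)\<^sup>2"
proof -
  have "st L 1 \<theta> \<theta>s = 1/2 * (\<Sum>i\<in>{0..L}. (sqrt 2 * (if i = 0 then \<theta> 0 else 0) - sqrt 2 * (if i = 0 then \<theta>s 0 else 0))\<^sup>2)"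
    unfolding st_def Tt1 sum_PiE1[where f="\<lambda>i. (sqrt 2 * (if i = 0 then \<theta> 0 else 0) - sqrt 2 * (if i = 0 then \<theta>s 0 else 0))\<^sup>2"] by simp
  also have "\<dots> = (th0 \<theta> - th0 \<theta>s)\<^sup>2"
    unfolding split1 by (simp add: th0_def power2_eq_square algebra_simps)
  finally show ?thesis .
qed

lemma cmod_sq: "Re (cnj z * z) = (cmod z)\<^sup>2"
  using cmod_power2[of z] by (simp add: power2_eq_square)

lemma rr_W: "l \<ge> 1 \<Longrightarrow> rr \<theta> l = cmod (W \<theta> l)"
  by (simp add: rr_def W_def)

lemma rr_sq: "(rr \<theta> l)\<^sup>2 = (th1 \<theta> l)\<^sup>2 + (th2 \<theta> l)\<^sup>2"
  by (simp add: rr_def cmod_power2)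

lemma rr_sq': "rr \<theta> l * rr \<theta> l = th1 \<theta> l * th1 \<theta> l + th2 \<theta> l * th2 \<theta> l"
  using rr_sq[of \<theta> l] by (simp add: power2_eq_square)

lemma F2_vals:
  "F2 \<theta> 0 0 = 2 * (th0 \<theta>)\<^sup>2"
  "j \<ge> 1 \<Longrightarrow> F2 \<theta> 0 j = 0"
  "i \<ge> 1 \<Longrightarrow> F2 \<theta> i 0 = 0"
  "i \<ge> 1 \<Longrightarrow> j \<ge> 1 \<Longrightarrow> F2 \<theta> i j = (if i = j then (rr \<theta> i)\<^sup>2 else 0)"
  by (auto simp: F2_def W_def th0_def rr_sq' power2_eq_square)

lemma st2: "st L 2 \<theta> \<theta>s = ((th0 \<theta>)\<^sup>2 - (th0 \<theta>s)\<^sup>2)\<^sup>2 + 1/4 * (\<Sum>l=1..L. ((rr \<theta> l)\<^sup>2 - (rr \<theta>s l)\<^sup>2)\<^sup>2)"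
proof -
  have "st L 2 \<theta> \<theta>s = 1/4 * (\<Sum>i\<in>{0..L}. \<Sum>j\<in>{0..L}. (F2 \<theta> i j - F2 \<theta>s i j)\<^sup>2)"
    unfolding st_def Tt2 sum_PiE2[where f="\<lambda>i j. (F2 \<theta> i j - F2 \<theta>s i j)\<^sup>2"] by simp
  also have "\<dots> = 1/4 * ((F2 \<theta> 0 0 - F2 \<theta>s 0 0)\<^sup>2 + (\<Sum>i\<in>{1..L}. \<Sum>j\<in>{1..L}. (F2 \<theta> i j - F2 \<theta>s i j)\<^sup>2))"
    unfolding split2 by (simp add: F2_vals)
  also have "(\<Sum>i\<in>{1..L}. \<Sum>j\<in>{1..L}. (F2 \<theta> i j - F2 \<theta>s i j)\<^sup>2) = (\<Sum>i\<in>{1..L}. \<Sum>j\<in>{1..L}. if i = j then ((rr \<theta> i)\<^sup>2 - (rr \<theta>s i)\<^sup>2)\<^sup>2 else 0)"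
    by (intro sum.cong refl) (auto simp: F2_vals)
  also have "\<dots> = (\<Sum>i\<in>{1..L}. ((rr \<theta> i)\<^sup>2 - (rr \<theta>s i)\<^sup>2)\<^sup>2)"
    by (intro sum.cong refl) (simp add: sum.delta)
  finally show ?thesis by (simp add: F2_vals power2_eq_square algebra_simps)
qed


definition P :: "(nat \<Rightarrow> real) \<Rightarrow> nat \<Rightarrow> nat \<Rightarrow> nat \<Rightarrow> real" where
  "P \<theta> l l' l'' = Re (W \<theta> l * cnj (W \<theta> l') * cnj (W \<theta> l''))"

lemma cnj_rcis: "cnj (rcis r a) = rcis r (- a)"
  by (simp add: rcis_def cis_cnj)

lemma W_rcis: "l \<ge> 1 \<Longrightarrow> W \<theta> l = rcis (rr \<theta> l) (lam \<theta> l)"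
  by (simp add: W_def rr_def lam_def rcis_cmod_Arg)

lemma P_polar: "l \<ge> 1 \<Longrightarrow> l' \<ge> 1 \<Longrightarrow> l'' \<ge> 1 \<Longrightarrow> P \<theta> l l' l'' = rrr \<theta> l l' l'' * cos (lll \<theta> l l' l'')"
  by (simp add: P_def W_rcis cnj_rcis rcis_mult rrr_def lll_def)

lemma summand_eq:
  fixes R Rs X Xs :: real
  shows "R\<^sup>2 + Rs\<^sup>2 - 2 * R * Rs * cos (Xs - X) + R\<^sup>2 * cos (2 * X) + Rs\<^sup>2 * cos (2 * Xs)
     - 2 * R * Rs * cos (Xs + X) = 2 * (R * cos X - Rs * cos Xs)\<^sup>2"
  unfolding cos_double_cos cos_diff cos_add by (simp add: power2_eq_square algebra_simps)

lemma F3_vals: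
  "F3 \<theta> 0 0 0 = 4 * (th0 \<theta>)^3"
  "k \<ge> 1 \<Longrightarrow> F3 \<theta> 0 0 k = 0"
  "j \<ge> 1 \<Longrightarrow> F3 \<theta> 0 j 0 = 0"
  "i \<ge> 1 \<Longrightarrow> F3 \<theta> i 0 0 = 0"
  "j \<ge> 1 \<Longrightarrow> k \<ge> 1 \<Longrightarrow> F3 \<theta> 0 j k = (if j = k then 2 * (th0 \<theta> * (rr \<theta> j)\<^sup>2) else 0)"
  "i \<ge> 1 \<Longrightarrow> k \<ge> 1 \<Longrightarrow> F3 \<theta> i 0 k = (if i = k then 2 * (th0 \<theta> * (rr \<theta> i)\<^sup>2) else 0)"
  "i \<ge> 1 \<Longrightarrow> j \<ge> 1 \<Longrightarrow> F3 \<theta> i j 0 = (if i = j then 2 * (th0 \<theta> * (rr \<theta> i)\<^sup>2) else 0)"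
  "i \<ge> 1 \<Longrightarrow> j \<ge> 1 \<Longrightarrow> k \<ge> 1 \<Longrightarrow> F3 \<theta> i j k = (if k = i + j then P \<theta> k i j else 0)
      + (if j = i + k then P \<theta> j i k else 0) + (if i = j + k then P \<theta> i j k else 0)"
  by (auto simp: F3_def W_def th0_def rr_sq' P_def power2_eq_square power3_eq_cube algebra_simps)

lemma split3: "(\<Sum>i\<in>{0..(L::nat)}. \<Sum>j\<in>{0..L}. \<Sum>k\<in>{0..L}. g i j k) = g 0 0 0
   + (\<Sum>k\<in>{1..L}. g 0 0 k) + (\<Sum>j\<in>{1..L}. g 0 j 0) + (\<Sum>i\<in>{1..L}. g i 0 0)
   + (\<Sum>j\<in>{1..L}. \<Sum>k\<in>{1..L}. g 0 j k) + (\<Sum>i\<in>{1..L}. \<Sum>k\<in>{1..L}. g i 0 k)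
   + (\<Sum>i\<in>{1..L}. \<Sum>j\<in>{1..L}. g i j 0)
   + (\<Sum>i\<in>{1..L}. \<Sum>j\<in>{1..L}. \<Sum>k\<in>{1..L}. (g i j k :: real))"
  by (simp add: split1 sum.distrib)

lemma sum_diag: "(\<Sum>j\<in>{1..(L::nat)}. \<Sum>k\<in>{1..L}. (if j = k then c j else 0)\<^sup>2) = (\<Sum>j\<in>{1..L}. (c j)\<^sup>2 :: real)"
proof -
  have "(\<Sum>j\<in>{1..L}. \<Sum>k\<in>{1..L}. (if j = k then c j else 0)\<^sup>2) = (\<Sum>j\<in>{1..L}. \<Sum>k\<in>{1..L}. if j = k then (c j)\<^sup>2 else 0)"
    by (intro sum.cong refl) auto
  also have "\<dots> = (\<Sum>j\<in>{1..L}. (c j)\<^sup>2)" by (intro sum.cong refl) (simp add: sum.delta)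
  finally show ?thesis .
qed

definition Sset :: "nat \<Rightarrow> (nat \<times> nat \<times> nat) set" where
  "Sset L = {(l, l', l''). l \<in> {1..L} \<and> l' \<in> {1..L} \<and> l'' \<in> {1..L} \<and> l = l' + l''}"

lemma sumS: "(\<Sum>i\<in>{1..L}. \<Sum>j\<in>{1..L}. \<Sum>k\<in>{1..L}. if i = j + k then f i j k else 0)
   = (\<Sum>(l, l', l'')\<in>Sset L. (f l l' l'' :: real))"
proof -
  have "(\<Sum>i\<in>{1..L}. \<Sum>j\<in>{1..L}. \<Sum>k\<in>{1..L}. if i = j + k then f i j k else 0)
     = (\<Sum>z\<in>{1..L} \<times> {1..L} \<times> {1..L}. (\<lambda>(i,j,k). if i = j + k then f i j k else 0) z)"
    by (simp add: sum.cartesian_product)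
  also have "\<dots> = (\<Sum>z\<in>{1..L} \<times> {1..L} \<times> {1..L}. if (\<lambda>(i,j,k). i = j + k) z then (\<lambda>(i,j,k). f i j k) z else 0)"
    by (intro sum.cong refl) auto
  also have "\<dots> = (\<Sum>z\<in>{z\<in>{1..L} \<times> {1..L} \<times> {1..L}. (\<lambda>(i,j,k). i = j + k) z}. (\<lambda>(i,j,k). f i j k) z)"
    by (rule sum.inter_filter[symmetric]) simp
  also have "{z\<in>{1..L} \<times> {1..L} \<times> {1..L}. (\<lambda>(i,j,k). i = j + k) z} = Sset L"
    by (auto simp: Sset_def)
  finally show ?thesis .
qed

lemma rot1: "(\<Sum>i\<in>A. \<Sum>j\<in>A. \<Sum>k\<in>A. h i j k) = (\<Sum>k\<in>A. \<Sum>i\<in>A. \<Sum>j\<in>A. (h i j k :: real))"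
proof -
  have "(\<Sum>i\<in>A. \<Sum>j\<in>A. \<Sum>k\<in>A. h i j k) = (\<Sum>i\<in>A. \<Sum>k\<in>A. \<Sum>j\<in>A. h i j k)"
    by (intro sum.cong refl sum.swap)
  also have "\<dots> = (\<Sum>k\<in>A. \<Sum>i\<in>A. \<Sum>j\<in>A. h i j k)" by (rule sum.swap)
  finally show ?thesis .
qed

lemma rot2: "(\<Sum>i\<in>A. \<Sum>j\<in>A. \<Sum>k\<in>A. h i j k) = (\<Sum>j\<in>A. \<Sum>i\<in>A. \<Sum>k\<in>A. (h i j k :: real))"
  by (rule sum.swap)


lemma st3: "st L 3 \<theta> \<theta>s = 2/3 * ((th0 \<theta>)^3 - (th0 \<theta>s)^3)\<^sup>2
           + 1/2 * (\<Sum>l=1..L. (th0 \<theta> * (rr \<theta> l)\<^sup>2 - th0 \<theta>s * (rr \<theta>s l)\<^sup>2)\<^sup>2)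
           + 1/16 * (\<Sum>(l, l', l'') \<in> {(l, l', l''). l \<in> {1..L} \<and> l' \<in> {1..L} \<and> l'' \<in> {1..L} \<and> l = l' + l''}.
                (rrr \<theta> l l' l'')\<^sup>2 + (rrr \<theta>s l l' l'')\<^sup>2
                - 2 * rrr \<theta> l l' l'' * rrr \<theta>s l l' l'' * cos (lll \<theta>s l l' l'' - lll \<theta> l l' l'')
                + (rrr \<theta> l l' l'')\<^sup>2 * cos (2 * lll \<theta> l l' l'')
                + (rrr \<theta>s l l' l'')\<^sup>2 * cos (2 * lll \<theta>s l l' l'')
                - 2 * rrr \<theta> l l' l'' * rrr \<theta>s l l' l'' * cos (lll \<theta>s l l' l'' + lll \<theta> l l' l''))"
  (is "_ = ?A + ?B + 1/16 * ?C")
proof -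
  define D where "D i j k = F3 \<theta> i j k - F3 \<theta>s i j k" for i j k
  define Q where "Q l l' l'' = P \<theta> l l' l'' - P \<theta>s l l' l''" for l l' l''
  define c where "c j = 2 * (th0 \<theta> * (rr \<theta> j)\<^sup>2 - th0 \<theta>s * (rr \<theta>s j)\<^sup>2)" for j
  have sq: "(sqrt 2 / 2 * a - sqrt 2 / 2 * b)\<^sup>2 = (a - b)\<^sup>2 / 2" for a b :: real
  proof -
    have "(sqrt 2 / 2 * a - sqrt 2 / 2 * b)\<^sup>2 = (sqrt 2)\<^sup>2 * (a - b)\<^sup>2 / 4"
      by (simp add: power2_eq_square algebra_simps)
    then show ?thesis by simp
  qed
  have f3: "fact 3 = (6::real)" by (simp add: fact_numeral)
  have e1: "st L 3 \<theta> \<theta>s = 1/24 * (\<Sum>i\<in>{0..L}. \<Sum>j\<in>{0..L}. \<Sum>k\<in>{0..L}. (D i j k)\<^sup>2)"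
  proof -
  have "st L 3 \<theta> \<theta>s = 1/12 * (\<Sum>i\<in>{0..L}. \<Sum>j\<in>{0..L}. \<Sum>k\<in>{0..L}. (D i j k)\<^sup>2 / 2)"
    unfolding st_def Tt3 sq sum_PiE3[where f="\<lambda>i j k. (F3 \<theta> i j k - F3 \<theta>s i j k)\<^sup>2 / 2"] f3 D_def
    by simp
  also have "\<dots> = 1/24 * (\<Sum>i\<in>{0..L}. \<Sum>j\<in>{0..L}. \<Sum>k\<in>{0..L}. (D i j k)\<^sup>2)"
    by (simp add: sum_divide_distrib[symmetric])
  finally show ?thesis .
  qed
  have e2: "(\<Sum>i\<in>{0..L}. \<Sum>j\<in>{0..L}. \<Sum>k\<in>{0..L}. (D i j k)\<^sup>2) =
      16 * ((th0 \<theta>)^3 - (th0 \<theta>s)^3)\<^sup>2 + 3 * (\<Sum>j\<in>{1..L}. (c j)\<^sup>2)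
      + (\<Sum>i\<in>{1..L}. \<Sum>j\<in>{1..L}. \<Sum>k\<in>{1..L}. (D i j k)\<^sup>2)"
  proof -
    have z1: "(\<Sum>k\<in>{1..L}. (D 0 0 k)\<^sup>2) = 0" "(\<Sum>k\<in>{1..L}. (D 0 k 0)\<^sup>2) = 0" "(\<Sum>k\<in>{1..L}. (D k 0 0)\<^sup>2) = 0"
      by (auto intro!: sum.neutral simp: D_def F3_vals)
    have m1: "(\<Sum>j\<in>{1..L}. \<Sum>k\<in>{1..L}. (D 0 j k)\<^sup>2) = (\<Sum>j\<in>{1..L}. (c j)\<^sup>2)"
      "(\<Sum>j\<in>{1..L}. \<Sum>k\<in>{1..L}. (D j 0 k)\<^sup>2) = (\<Sum>j\<in>{1..L}. (c j)\<^sup>2)"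
      "(\<Sum>j\<in>{1..L}. \<Sum>k\<in>{1..L}. (D j k 0)\<^sup>2) = (\<Sum>j\<in>{1..L}. (c j)\<^sup>2)"
    proof -
      have "(\<Sum>j\<in>{1..L}. \<Sum>k\<in>{1..L}. (D 0 j k)\<^sup>2) = (\<Sum>j\<in>{1..L}. \<Sum>k\<in>{1..L}. (if j = k then c j else 0)\<^sup>2)"
        by (intro sum.cong refl) (auto simp: D_def F3_vals c_def algebra_simps)
      then show "(\<Sum>j\<in>{1..L}. \<Sum>k\<in>{1..L}. (D 0 j k)\<^sup>2) = (\<Sum>j\<in>{1..L}. (c j)\<^sup>2)" by (simp only: sum_diag)
      have "(\<Sum>j\<in>{1..L}. \<Sum>k\<in>{1..L}. (D j 0 k)\<^sup>2) = (\<Sum>j\<in>{1..L}. \<Sum>k\<in>{1..L}. (if j = k then c j else 0)\<^sup>2)"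
        by (intro sum.cong refl) (auto simp: D_def F3_vals c_def algebra_simps)
      then show "(\<Sum>j\<in>{1..L}. \<Sum>k\<in>{1..L}. (D j 0 k)\<^sup>2) = (\<Sum>j\<in>{1..L}. (c j)\<^sup>2)" by (simp only: sum_diag)
      have "(\<Sum>j\<in>{1..L}. \<Sum>k\<in>{1..L}. (D j k 0)\<^sup>2) = (\<Sum>j\<in>{1..L}. \<Sum>k\<in>{1..L}. (if j = k then c j else 0)\<^sup>2)"
        by (intro sum.cong refl) (auto simp: D_def F3_vals c_def algebra_simps)
      then show "(\<Sum>j\<in>{1..L}. \<Sum>k\<in>{1..L}. (D j k 0)\<^sup>2) = (\<Sum>j\<in>{1..L}. (c j)\<^sup>2)" by (simp only: sum_diag)
    qed
    have d0: "(D 0 0 0)\<^sup>2 = 16 * ((th0 \<theta>)^3 - (th0 \<theta>s)^3)\<^sup>2"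
      by (simp add: D_def F3_vals power2_eq_square algebra_simps)
    show ?thesis unfolding split3[where L=L and g="\<lambda>i j k. (D i j k)\<^sup>2"] z1 m1 d0 by simp
  qed
  have e3: "(\<Sum>i\<in>{1..L}. \<Sum>j\<in>{1..L}. \<Sum>k\<in>{1..L}. (D i j k)\<^sup>2) = 3 * (\<Sum>(l, l', l'')\<in>Sset L. (Q l l' l'')\<^sup>2)"
  proof -
    have "(\<Sum>i\<in>{1..L}. \<Sum>j\<in>{1..L}. \<Sum>k\<in>{1..L}. (D i j k)\<^sup>2) =
      (\<Sum>i\<in>{1..L}. \<Sum>j\<in>{1..L}. \<Sum>k\<in>{1..L}. (if k = i + j then (Q k i j)\<^sup>2 else 0)
         + (if j = i + k then (Q j i k)\<^sup>2 else 0) + (if i = j + k then (Q i j k)\<^sup>2 else 0))"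
      by (intro sum.cong refl) (auto simp: D_def Q_def F3_vals)
    also have "\<dots> = (\<Sum>i\<in>{1..L}. \<Sum>j\<in>{1..L}. \<Sum>k\<in>{1..L}. if k = i + j then (Q k i j)\<^sup>2 else 0)
       + (\<Sum>i\<in>{1..L}. \<Sum>j\<in>{1..L}. \<Sum>k\<in>{1..L}. if j = i + k then (Q j i k)\<^sup>2 else 0)
       + (\<Sum>i\<in>{1..L}. \<Sum>j\<in>{1..L}. \<Sum>k\<in>{1..L}. if i = j + k then (Q i j k)\<^sup>2 else 0)"
      by (simp only: sum.distrib)
    also have "(\<Sum>i\<in>{1..L}. \<Sum>j\<in>{1..L}. \<Sum>k\<in>{1..L}. if k = i + j then (Q k i j)\<^sup>2 else 0)
        = (\<Sum>(l, l', l'')\<in>Sset L. (Q l l' l'')\<^sup>2)"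
      by (subst rot1) (rule sumS)
    also have "(\<Sum>i\<in>{1..L}. \<Sum>j\<in>{1..L}. \<Sum>k\<in>{1..L}. if j = i + k then (Q j i k)\<^sup>2 else 0)
        = (\<Sum>(l, l', l'')\<in>Sset L. (Q l l' l'')\<^sup>2)"
      by (subst rot2) (rule sumS)
    also have "(\<Sum>i\<in>{1..L}. \<Sum>j\<in>{1..L}. \<Sum>k\<in>{1..L}. if i = j + k then (Q i j k)\<^sup>2 else 0)
        = (\<Sum>(l, l', l'')\<in>Sset L. (Q l l' l'')\<^sup>2)"
      by (rule sumS)
    finally show ?thesis by simp
  qed
  have e4: "?C = 2 * (\<Sum>(l, l', l'')\<in>Sset L. (Q l l' l'')\<^sup>2)"
    unfolding Sset_def[symmetric] sum_distrib_left
  proof (intro sum.cong refl)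
    fix x assume x: "x \<in> Sset L"
    obtain l l' l'' where xe: "x = (l, l', l'')" by (cases x) auto
    have ge: "l \<ge> 1" "l' \<ge> 1" "l'' \<ge> 1" using x xe by (auto simp: Sset_def)
    show "(case x of (l, l', l'') \<Rightarrow>
                (rrr \<theta> l l' l'')\<^sup>2 + (rrr \<theta>s l l' l'')\<^sup>2
                - 2 * rrr \<theta> l l' l'' * rrr \<theta>s l l' l'' * cos (lll \<theta>s l l' l'' - lll \<theta> l l' l'')
                + (rrr \<theta> l l' l'')\<^sup>2 * cos (2 * lll \<theta> l l' l'')
                + (rrr \<theta>s l l' l'')\<^sup>2 * cos (2 * lll \<theta>s l l' l'')
                - 2 * rrr \<theta> l l' l'' * rrr \<theta>s l l' l'' * cos (lll \<theta>s l l' l'' + lll \<theta> l l' l''))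
         = 2 * (case x of (l, l', l'') \<Rightarrow> (Q l l' l'')\<^sup>2)"
      unfolding xe prod.case summand_eq Q_def P_polar[OF ge] P_polar[OF ge, of \<theta>s] ..
  qed
  have e5: "(\<Sum>j\<in>{1..L}. (c j)\<^sup>2) = 4 * (\<Sum>l=1..L. (th0 \<theta> * (rr \<theta> l)\<^sup>2 - th0 \<theta>s * (rr \<theta>s l)\<^sup>2)\<^sup>2)"
    unfolding c_def power_mult_distrib sum_distrib_left by simp
  show ?thesis unfolding e1 e2 e3 e4 e5 by simp
qed


theorem theoremC2:
  fixes L :: nat and \<theta> \<theta>s :: "nat \<Rightarrow> real"
  assumes "L \<ge> 1"
  shows "st L 1 \<theta> \<theta>s = (th0 \<theta> - th0 \<theta>s)\<^sup>2
    \<and> st L 2 \<theta> \<theta>s = ((th0 \<theta>)\<^sup>2 - (th0 \<theta>s)\<^sup>2)\<^sup>2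
           + 1/4 * (\<Sum>l=1..L. ((rr \<theta> l)\<^sup>2 - (rr \<theta>s l)\<^sup>2)\<^sup>2)
    \<and> st L 3 \<theta> \<theta>s = 2/3 * ((th0 \<theta>)^3 - (th0 \<theta>s)^3)\<^sup>2
           + 1/2 * (\<Sum>l=1..L. (th0 \<theta> * (rr \<theta> l)\<^sup>2 - th0 \<theta>s * (rr \<theta>s l)\<^sup>2)\<^sup>2)
           + 1/16 * (\<Sum>(l, l', l'') \<in> {(l, l', l''). l \<in> {1..L} \<and> l' \<in> {1..L} \<and> l'' \<in> {1..L} \<and> l = l' + l''}.
                (rrr \<theta> l l' l'')\<^sup>2 + (rrr \<theta>s l l' l'')\<^sup>2
                - 2 * rrr \<theta> l l' l'' * rrr \<theta>s l l' l'' * cos (lll \<theta>s l l' l'' - lll \<theta> l l' l'')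
                + (rrr \<theta> l l' l'')\<^sup>2 * cos (2 * lll \<theta> l l' l'')
                + (rrr \<theta>s l l' l'')\<^sup>2 * cos (2 * lll \<theta>s l l' l'')
                - 2 * rrr \<theta> l l' l'' * rrr \<theta>s l l' l'' * cos (lll \<theta>s l l' l'' + lll \<theta> l l' l''))"
  using st1 st2 st3 by blast

end
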